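(* Let $Z$ be a topological space and let $f\colon Z\to\mathbb{R}$ be a function (not assumed continuous). Define \[ \Gamma_f^{<}=\{(z,\alpha)\in Z\times\mathbb{R} \mid f(z)<\alpha\}, \] equipped with the subspace topology from $Z\times\mathbb{R}$. If there exists a continuous function $g\colon Z\to\mathbb{R}$ with $f(z)\le g(z)$ for all $z\in Z$, then $\Gamma_f^{<}$ is homotopy equivalent to $Z$. *)

theory Defs
  imports "HOL-Analysis.Analysis"
begin

end

theory Submission
  imports Defs
begin

theorem lemma3p1:
  fixes Z :: "'a topology" and f g :: "'a \<Rightarrow> real"
  assumes "continuous_map Z euclideanreal g"
    and "\<forall>z\<in>topspace Z. f z \<le> g z"
  shows "(subtopology (prod_topology Z euclideanreal) {(z, \<alpha>). z \<in> topspace Z \<and> f z < \<alpha>})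
           homotopy_equivalent_space Z"
proof -
  define S where "S = {(z, \<alpha>). z \<in> topspace Z \<and> f z < \<alpha>}"
  define X where "X = subtopology (prod_topology Z euclideanreal) S"
  have tX: "topspace X = S" unfolding X_def S_def by (auto simp: topspace_subtopology)
  have gc: "continuous_map Z euclideanreal g" by fact
  have p: "continuous_map X Z fst"
    unfolding X_def by (intro continuous_map_from_subtopology continuous_map_fst)
  have s: "continuous_map Z X (\<lambda>z. (z, g z + 1))"
    unfolding X_def continuous_map_in_subtopology
  proof
    show "continuous_map Z (prod_topology Z euclideanreal) (\<lambda>z. (z, g z + 1))"
      unfolding continuous_map_pairwise o_def
      using gc continuous_map_add[OF gc continuous_map_const[THEN iffD2]] by (simp add: id_def[symmetric])
    show "(\<lambda>z. (z, g z + 1)) \<in> topspace Z \<rightarrow> S"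
      using assms(2) by (force simp: S_def)
  qed
  have h1: "homotopic_with (\<lambda>x. True) Z Z (fst \<circ> (\<lambda>z. (z, g z + 1))) id"
    by (rule homotopic_with_equal) (auto simp: o_def)
  define H where "H = (\<lambda>(t::real, (z::'a, a::real)). (z, t * a + (1 - t) * (g z + 1)))"
  have Hc: "continuous_map (prod_topology (top_of_set {0..1::real}) X) X H"
  proof -
    have c1: "continuous_map (prod_topology (top_of_set {0..1::real}) X) Z (\<lambda>x. fst (snd x))"
      using continuous_map_compose[OF continuous_map_snd p] by (simp add: o_def)
    have c2: "continuous_map (prod_topology (top_of_set {0..1::real}) X) euclideanreal (\<lambda>x. fst x)"
      using continuous_map_compose[OF continuous_map_fst continuous_map_from_subtopology[OF continuous_map_id]]
      by (simp add: o_def)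
    have A: "continuous_map (prod_topology (top_of_set {0..1::real}) X) (prod_topology Z euclideanreal) H"
      unfolding continuous_map_pairwise o_def H_def
    proof (simp add: case_prod_unfold, intro conjI c1)
      have c3: "continuous_map (prod_topology (top_of_set {0..1::real}) X) euclideanreal (\<lambda>x. snd (snd x))"
      proof -
        have q: "continuous_map X euclideanreal snd"
          unfolding X_def by (intro continuous_map_from_subtopology continuous_map_snd)
        show ?thesis using continuous_map_compose[OF continuous_map_snd q] by (simp add: o_def)
      qed
      have c4: "continuous_map (prod_topology (top_of_set {0..1::real}) X) euclideanreal (\<lambda>x. g (fst (snd x)))"
        using continuous_map_compose[OF c1 gc] by (simp add: o_def)
      show "continuous_map (prod_topology (top_of_set {0..1::real}) X) euclideanreal
         (\<lambda>x. fst x * snd (snd x) + (1 - fst x) * (g (fst (snd x)) + 1))"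
        by (intro continuous_intros c2 c3 c4)
    qed
    have B: "H \<in> topspace (prod_topology (top_of_set {0..1::real}) X) \<rightarrow> S"
    proof
      fix x assume "x \<in> topspace (prod_topology (top_of_set {0..1::real}) X)"
      then obtain t z a where x: "x = (t,(z,a))" "0 \<le> t" "t \<le> 1" "z \<in> topspace Z" "f z < a"
        using tX by (auto simp: S_def)
      have "f z \<le> g z" using assms(2) x by auto
      have "t * f z + (1 - t) * f z < t * a + (1 - t) * (g z + 1)"
      proof (cases "t = 0")
        case True then show ?thesis using \<open>f z \<le> g z\<close> by simp
      next
        case False
        then have "t * f z < t * a" using x by simp
        moreover have "(1 - t) * f z \<le> (1 - t) * (g z + 1)" using x \<open>f z \<le> g z\<close> by (intro mult_left_mono) auto
        ultimately show ?thesis by linarith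
      qed
      then show "H x \<in> S" using x by (simp add: H_def S_def algebra_simps)
    qed
    have "continuous_map (prod_topology (top_of_set {0..1::real}) X) (subtopology (prod_topology Z euclideanreal) S) H"
      using A B by (simp add: continuous_map_in_subtopology)
    then show ?thesis by (simp add: X_def)
  qed
  have h2: "homotopic_with (\<lambda>x. True) X X ((\<lambda>z. (z, g z + 1)) \<circ> fst) id"
    unfolding homotopic_with_def
    by (intro exI[of _ H] conjI Hc allI ballI) (simp_all add: H_def case_prod_unfold)
  show ?thesis
    unfolding homotopy_equivalent_space_def X_def[symmetric] S_def[symmetric]
    using p s h1 h2 by blast
qed

end
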